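(* Let $\mathcal{X}$ be a Banach space and $\mathcal{U}=\mathcal{X}^*$ (duality pairing $\langle\cdot,\cdot\rangle_{\mathcal{U},\mathcal{X}}$), $\mathcal{W},\mathcal{Y}$ reflexive Banach spaces, $\mathcal{G}$ a Hilbert space, $g^\delta\in\mathcal{G}$, $\alpha>0$, $A\in L(\mathcal{Y},\mathcal{W}^* )$ continuously invertible, $B\in L(\mathcal{U},\mathcal{W}^* )$ admitting $B^*\in L(\mathcal{W},\mathcal{X})$ with $\langle Bu,w\rangle_{\mathcal{W}^*,\mathcal{W}}=\langle u,B^*w\rangle_{\mathcal{U},\mathcal{X}}$ for all $u\in\mathcal{U}$, $w\in\mathcal{W}$, and $C\in L(\mathcal{Y},\mathcal{G})$. Let $\mathcal{R}_\alpha$ be the indicator function of $B^\mathcal{U}_{1/\alpha}=\{u\in\mathcal{U}:\|u\|_\mathcal{U}\le1/\alpha\}$ and $J_\alpha(u,y)=\frac12\|Cy-g^\delta\|_\mathcal{G}^2+\mathcal{R}_\alpha(u)$. Let $\mathcal{U}_h\subset\mathcal{U}$, $\mathcal{Y}_h\subset\mathcal{Y}$, $\mathcal{W}_h\subset\mathcal{W}$ be finite-dimensional subspaces. Let $(\bar u,\bar y)$ minimize $J_\alpha$ over $\mathcal{U}\times\mathcal{Y}$ subject to $Ay=Bu$, and let $(\bar u_h,\bar y_h)$ minimize $J_\alpha$ over $\mathcal{U}_h\times\mathcal{Y}_h$ subject to $\langle Ay-Bu,w_h\rangle_{\mathcal{W}^*,\mathcal{W}}=0$ for all $w_h\in\mathcal{W}_h$,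 with $\bar w_h\in\mathcal{W}_h$ such that $$\langle C^*(C\bar y_h-g^\delta)+A^*\bar w_h,y_h\rangle_{\mathcal{Y}^*,\mathcal{Y}}=0\ \forall y_h\in\mathcal{Y}_h,\quad \bar u_h\in B^{\mathcal{U}_h}_{1/\alpha},\ \ \langle u_h-\bar u_h,B^*\bar w_h\rangle_{\mathcal{U},\mathcal{X}}\le0\ \forall u_h\in B^{\mathcal{U}_h}_{1/\alpha},$$ where $B^{\mathcal{U}_h}_{1/\alpha}=B^\mathcal{U}_{1/\alpha}\cap\mathcal{U}_h$. Let $\mathcal{J}^\mathcal{X}:\mathcal{X}\to\mathcal{U}$ be a duality mapping, i.e. $\|\mathcal{J}^\mathcal{X}(x)\|_\mathcal{U}=1$ and $\langle\mathcal{J}^\mathcal{X}(x),x\rangle_{\mathcal{U},\mathcal{X}}=\|x\|_\mathcal{X}$ for all $x\in\mathcal{X}$. Let $\hat w\in\mathcal{W}$ solve $C^*(C\bar y_h-g^\delta)+A^*\hat w=0$ and define $$\rho_y:=A\bar y_h-B\bar u_h,\qquad \rho_u:=\alpha\bar u_h-\mathcal{J}^\mathcal{X}(B^*\bar w_h),$$ $$D(B^*\hat w,B^*\bar w_h):=\langle\mathcal{J}^\mathcal{X}(B^*\hat w)-\mathcal{J}^\mathcal{X}(B^*\bar w_h),B^*(\hat w-\bar w_h)\rangle_{\mathcal{U},\mathcal{X}}.$$ Then $$\|C\bar y_h-C\bar y\|_\mathcal{G}^2\le\frac4\alpha\langle-\rho_u,B^*\hat w\rangle_{\mathcal{U},\mathcal{X}}+\frac4\alpha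 D(B^*\hat w,B^*\bar w_h)+4\|CA^{-1}\rho_y\|_\mathcal{G}^2,$$ $$J_\alpha(\bar u_h,\bar y_h)-J_\alpha(\bar u,\bar y)\le\frac1\alpha\langle-\rho_u,B^*\hat w\rangle_{\mathcal{U},\mathcal{X}}+\frac1\alpha D(B^*\hat w,B^*\bar w_h)+\|CA^{-1}\rho_y\|_\mathcal{G}\,\|C\bar y_h-g^\delta\|_\mathcal{G}.$$
   Context: $A^*\in L(\mathcal{W},\mathcal{Y}^* )$ and $C^*\in L(\mathcal{G},\mathcal{Y}^* )$ denote the adjoints defined by $\langle Ay,w\rangle_{\mathcal{W}^*,\mathcal{W}}=\langle y,A^*w\rangle_{\mathcal{Y},\mathcal{Y}^*}$ and $(Cy,g)_\mathcal{G}=\langle y,C^*g\rangle_{\mathcal{Y},\mathcal{Y}^*}$. $D$ is the symmetric Bregman distance associated with $\|\cdot\|_\mathcal{X}$. *)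

theory Defs
  imports "HOL-Analysis.Analysis"
begin

(* Dual space of a normed space 'a is 'a =>L real; the duality pairing is application. *)

definition reflexive_space :: "'a::real_normed_vector itself \<Rightarrow> bool" where
  "reflexive_space _ \<longleftrightarrow>
     (\<forall>\<phi> :: ('a \<Rightarrow>\<^sub>L real) \<Rightarrow>\<^sub>L real. \<exists>x::'a. \<forall>f. blinfun_apply \<phi> f = blinfun_apply f x)"

definition finite_dim_subspace :: "'a::real_vector set \<Rightarrow> bool" where
  "finite_dim_subspace S \<longleftrightarrow> subspace S \<and> (\<exists>Bs. finite Bs \<and> S = span Bs)"

definition R_alpha :: "real \<Rightarrow> ('x::real_normed_vector \<Rightarrow>\<^sub>L real) \<Rightarrow> ereal" where
  "R_alpha \<alpha> u = (if norm u \<le> 1 / \<alpha> then 0 else \<infinity>)"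

definition J_alpha ::
  "('y::real_normed_vector \<Rightarrow>\<^sub>L 'g::real_inner) \<Rightarrow> 'g \<Rightarrow> real
     \<Rightarrow> ('x::real_normed_vector \<Rightarrow>\<^sub>L real) \<Rightarrow> 'y \<Rightarrow> ereal" where
  "J_alpha C gd \<alpha> u y = ereal ((1/2) * (norm (blinfun_apply C y - gd))\<^sup>2) + R_alpha \<alpha> u"

end

theory Submission
  imports Defs
begin

theorem proposition4p2:
  fixes A :: "'y::banach \<Rightarrow>\<^sub>L ('w::banach \<Rightarrow>\<^sub>L real)"
    and Ainv :: "('w \<Rightarrow>\<^sub>L real) \<Rightarrow>\<^sub>L 'y"
    and B :: "('x::banach \<Rightarrow>\<^sub>L real) \<Rightarrow>\<^sub>L ('w \<Rightarrow>\<^sub>L real)"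
    and Bs :: "'w \<Rightarrow>\<^sub>L 'x"
    and C :: "'y \<Rightarrow>\<^sub>L 'g::{real_inner, complete_space}"
    and gd :: 'g
    and \<alpha> :: real
    and Uh :: "('x \<Rightarrow>\<^sub>L real) set" and Yh :: "'y set" and Wh :: "'w set"
    and ub :: "'x \<Rightarrow>\<^sub>L real" and yb :: 'y
    and ubh :: "'x \<Rightarrow>\<^sub>L real" and ybh :: 'y and wbh :: 'w
    and JX :: "'x \<Rightarrow> ('x \<Rightarrow>\<^sub>L real)"
    and what :: 'w
  assumes reflW: "reflexive_space TYPE('w)"
    and reflY: "reflexive_space TYPE('y)"
    and alpha_pos: "\<alpha> > 0"
    and Ainv_left: "\<And>y. blinfun_apply Ainv (blinfun_apply A y) = y"
    and Ainv_right: "\<And>f. blinfun_apply A (blinfun_apply Ainv f) = f"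
    and Bs_adj: "\<And>u w. blinfun_apply (blinfun_apply B u) w = blinfun_apply u (blinfun_apply Bs w)"
    and Uh_fd: "finite_dim_subspace Uh"
    and Yh_fd: "finite_dim_subspace Yh"
    and Wh_fd: "finite_dim_subspace Wh"
    and cont_feas: "blinfun_apply A yb = blinfun_apply B ub"
    and cont_min: "\<And>u y. blinfun_apply A y = blinfun_apply B u \<Longrightarrow>
                      J_alpha C gd \<alpha> ub yb \<le> J_alpha C gd \<alpha> u y"
    and ubh_in: "ubh \<in> Uh" and ybh_in: "ybh \<in> Yh"
    and disc_feas: "\<And>wh. wh \<in> Wh \<Longrightarrow>
                      blinfun_apply (blinfun_apply A ybh - blinfun_apply B ubh) wh = 0"
    and disc_min: "\<And>u y. u \<in> Uh \<Longrightarrow> y \<in> Yh \<Longrightarrow>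
                      (\<forall>wh\<in>Wh. blinfun_apply (blinfun_apply A y - blinfun_apply B u) wh = 0) \<Longrightarrow>
                      J_alpha C gd \<alpha> ubh ybh \<le> J_alpha C gd \<alpha> u y"
    and wbh_in: "wbh \<in> Wh"
    and adj_disc: "\<And>yh. yh \<in> Yh \<Longrightarrow>
                      inner (blinfun_apply C yh) (blinfun_apply C ybh - gd)
                      + blinfun_apply (blinfun_apply A yh) wbh = 0"
    and ubh_ball: "norm ubh \<le> 1 / \<alpha>"
    and var_ineq: "\<And>uh. uh \<in> Uh \<Longrightarrow> norm uh \<le> 1 / \<alpha> \<Longrightarrow>
                      blinfun_apply (uh - ubh) (blinfun_apply Bs wbh) \<le> 0"
    and JX_norm: "\<And>x. norm (JX x) = 1"
    and JX_pair: "\<And>x. blinfun_apply (JX x) x = norm x"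
    and what_eq: "\<And>y. inner (blinfun_apply C y) (blinfun_apply C ybh - gd)
                      + blinfun_apply (blinfun_apply A y) what = 0"
  shows "let rho_y = blinfun_apply A ybh - blinfun_apply B ubh;
             rho_u = \<alpha> *\<^sub>R ubh - JX (blinfun_apply Bs wbh);
             D = blinfun_apply (JX (blinfun_apply Bs what) - JX (blinfun_apply Bs wbh))
                   (blinfun_apply Bs (what - wbh))
         in (norm (blinfun_apply C ybh - blinfun_apply C yb))\<^sup>2
              \<le> 4 / \<alpha> * blinfun_apply (- rho_u) (blinfun_apply Bs what) + 4 / \<alpha> * D
                + 4 * (norm (blinfun_apply C (blinfun_apply Ainv rho_y)))\<^sup>2
          \<and> J_alpha C gd \<alpha> ubh ybh - J_alpha C gd \<alpha> ub yb
              \<le> ereal (1 / \<alpha> * blinfun_apply (- rho_u) (blinfun_apply Bs what) + 1 / \<alpha> * D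
                + norm (blinfun_apply C (blinfun_apply Ainv rho_y)) * norm (blinfun_apply C ybh - gd))"
proof -
  define rho_y where "rho_y = blinfun_apply A ybh - blinfun_apply B ubh"
  define rho_u where "rho_u = \<alpha> *\<^sub>R ubh - JX (blinfun_apply Bs wbh)"
  define xh where "xh = blinfun_apply Bs what"
  define xw where "xw = blinfun_apply Bs wbh"
  define D where "D = blinfun_apply (JX xh - JX xw) (blinfun_apply Bs (what - wbh))"
  define z where "z = blinfun_apply C ybh - gd"
  define e where "e = blinfun_apply C ybh - blinfun_apply C yb"
  define r where "r = blinfun_apply C (blinfun_apply Ainv rho_y)"
  define f where "f = (\<lambda>y. (1/2) * (norm (blinfun_apply C y - gd))\<^sup>2)"
  define P where "P = 1 / \<alpha> * blinfun_apply (- rho_u) xh + 1 / \<alpha> * D"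
  define yhat where "yhat = blinfun_apply Ainv (blinfun_apply B ubh)"
  have J_eq: "norm u \<le> 1/\<alpha> \<Longrightarrow> J_alpha C gd \<alpha> u y = ereal (f y)" for u y
    by (simp add: J_alpha_def R_alpha_def f_def)
  have Ayhat: "blinfun_apply A yhat = blinfun_apply B ubh"
    by (simp add: yhat_def Ainv_right)
  have cm: "J_alpha C gd \<alpha> ub yb \<le> J_alpha C gd \<alpha> ubh yhat"
    using cont_min[OF Ayhat] .
  have ub_ball: "norm ub \<le> 1/\<alpha>"
  proof (rule ccontr)
    assume "\<not> ?thesis"
    then have "J_alpha C gd \<alpha> ub yb = \<infinity>" by (simp add: J_alpha_def R_alpha_def)
    with cm show False using J_eq[OF ubh_ball] by simp
  qed
  have fle: "f yb \<le> f yhat"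
    using cm J_eq[OF ubh_ball] J_eq[OF ub_ball] by simp
  have yhat_eq: "yhat = ybh - blinfun_apply Ainv rho_y"
  proof -
    have "blinfun_apply B ubh = blinfun_apply A ybh - rho_y" by (simp add: rho_y_def)
    then have "yhat = blinfun_apply Ainv (blinfun_apply A ybh) - blinfun_apply Ainv rho_y"
      by (simp add: yhat_def blinfun.diff_right)
    then show ?thesis by (simp add: Ainv_left)
  qed
  have fyhat: "f yhat = (1/2) * (norm (z - r))\<^sup>2"
    by (simp add: f_def yhat_eq blinfun.diff_right z_def r_def algebra_simps)
  have fz: "f ybh = (1/2) * (norm z)\<^sup>2" by (simp add: f_def z_def)
  have F1: "f yb = f ybh - inner z e + (1/2) * (norm e)\<^sup>2"
  proof -
    have "blinfun_apply C yb - gd = z - e" by (simp add: z_def e_def)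
    then have "f yb = (1/2) * (norm (z - e))\<^sup>2" by (simp add: f_def)
    also have "\<dots> = f ybh - inner z e + (1/2) * (norm e)\<^sup>2"
      by (simp add: fz power2_norm_eq_inner inner_diff_left inner_diff_right inner_commute algebra_simps)
    finally show ?thesis .
  qed
  have F6: "f yhat = f ybh - inner z r + (1/2) * (norm r)\<^sup>2"
    by (simp add: fyhat fz power2_norm_eq_inner inner_diff_left inner_diff_right inner_commute algebra_simps)
  have F3: "blinfun_apply rho_y what = - inner r z"
    using what_eq[of "blinfun_apply Ainv rho_y"] by (simp add: Ainv_right r_def z_def)
  have F2: "inner e z = - blinfun_apply rho_y what - blinfun_apply ubh xh + blinfun_apply ub xh"
  proof -
    have "inner e z + blinfun_apply (blinfun_apply A (ybh - yb)) what = 0"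
      using what_eq[of "ybh - yb"] by (simp add: e_def z_def blinfun.diff_right)
    moreover have "blinfun_apply (blinfun_apply A (ybh - yb)) what
        = blinfun_apply rho_y what + blinfun_apply ubh xh - blinfun_apply ub xh"
      by (simp add: blinfun.diff_right cont_feas rho_y_def blinfun.diff_left Bs_adj xh_def)
    ultimately show ?thesis by linarith
  qed
  have F4: "\<alpha> * blinfun_apply ub xh \<le> norm xh"
  proof -
    have "blinfun_apply ub xh \<le> norm ub * norm xh"
      using norm_blinfun[of ub xh] by simp
    also have "\<dots> \<le> 1/\<alpha> * norm xh" by (rule mult_right_mono[OF ub_ball]) simp
    finally show ?thesis using alpha_pos by (simp add: field_simps)
  qed
  have F5: "blinfun_apply (JX xh) xw \<le> norm xw"
    using norm_blinfun[of "JX xh" xw] JX_norm[of xh] by simp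
  have Dexp: "D = blinfun_apply (JX xh) xh - blinfun_apply (JX xh) xw
       - blinfun_apply (JX xw) xh + blinfun_apply (JX xw) xw"
    by (simp add: D_def blinfun.diff_right blinfun.diff_left xh_def xw_def)
  have Pexp: "\<alpha> * P = - \<alpha> * blinfun_apply ubh xh + blinfun_apply (JX xw) xh + D"
    using alpha_pos by (simp add: P_def rho_u_def blinfun.diff_left blinfun.scaleR_left xw_def field_simps)
  have key: "blinfun_apply ub xh - blinfun_apply ubh xh \<le> P"
  proof -
    have "\<alpha> * (blinfun_apply ub xh - blinfun_apply ubh xh) \<le> \<alpha> * P"
      using F4 F5 Pexp Dexp JX_pair[of xh] JX_pair[of xw] by (simp add: algebra_simps)
    then show ?thesis using alpha_pos by simp
  qed
  have main: "f ybh - f yb + (1/2) * (norm e)\<^sup>2 \<le> P + inner r z"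
    using F1 F2 F3 key by (simp add: inner_commute)
  have rz: "inner r z \<le> norm r * norm z"
    by (rule norm_cauchy_schwarz)
  have part2: "f ybh - f yb \<le> P + norm r * norm z"
    using main rz zero_le_power2[of "norm e"] by linarith
  have part1a: "(norm e)\<^sup>2 \<le> 2 * P + (norm r)\<^sup>2"
    using main fle F6 by (simp add: inner_commute)
  have part1: "(norm e)\<^sup>2 \<le> 4 * P + 4 * (norm r)\<^sup>2"
    using part1a zero_le_power2[of "norm e"] zero_le_power2[of "norm r"] by linarith
  have P4: "4 * P = 4 / \<alpha> * blinfun_apply (- rho_u) xh + 4 / \<alpha> * D"
    by (simp add: P_def algebra_simps)
  have Jd: "J_alpha C gd \<alpha> ubh ybh - J_alpha C gd \<alpha> ub yb = ereal (f ybh - f yb)"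
    using J_eq[OF ubh_ball] J_eq[OF ub_ball] by simp
  have P1: "(norm e)\<^sup>2 \<le> 4 / \<alpha> * blinfun_apply (- rho_u) xh + 4 / \<alpha> * D + 4 * (norm r)\<^sup>2"
    using part1 P4 by linarith
  have P2: "J_alpha C gd \<alpha> ubh ybh - J_alpha C gd \<alpha> ub yb
      \<le> ereal (1 / \<alpha> * blinfun_apply (- rho_u) xh + 1 / \<alpha> * D + norm r * norm z)"
    unfolding Jd using part2 by (simp add: P_def)
  show ?thesis
    unfolding Let_def rho_y_def[symmetric] rho_u_def[symmetric] xh_def[symmetric] xw_def[symmetric]
        D_def[symmetric] e_def[symmetric] r_def[symmetric] z_def[symmetric]
    using P1 P2 unfolding rho_u_def xw_def by (rule conjI)
qed

end
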